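(* Let $n\ge 1$ and $\psi,\eta\in(0,1)^n$. Let $Y\in\{0,1\}$ be a random bit with $\mathbb{P}(Y=1)=\mathbb{P}(Y=0)=1/2$, and conditionally on $Y$ let $X_1,\ldots,X_n\in\{0,1\}$ be independent with $\mathbb{P}(X_i=1\mid Y=1)=\psi_i$ and $\mathbb{P}(X_i=0\mid Y=0)=\eta_i$. Let $f^{\mathrm{OPT}}:\{0,1\}^n\to\{0,1\}$ be a decision rule minimizing $\mathbb{P}(f(X)\neq Y)$ over all $f:\{0,1\}^n\to\{0,1\}$, where $X=(X_1,\ldots,X_n)$. Then, with $\pi_i=(\psi_i+\eta_i)/2$, $$\mathbb{P}(f^{\mathrm{OPT}}(X)\neq Y)\le\frac12\sqrt{\prod_{i=1}^n(\psi_i+\eta_i)(2-\psi_i-\eta_i)}=\frac12\cdot 2^n\sqrt{\prod_{i=1}^n\pi_i(1-\pi_i)} .$$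
   Context: $\pi_i=(\psi_i+\eta_i)/2$ is called the balanced accuracy of expert $i$; $\psi_i$ is its sensitivity and $\eta_i$ its specificity. *)

theory Defs
  imports "HOL-Analysis.Analysis"
begin

text \<open>Bits are encoded as bool (True = 1, False = 0). An observation
  X = (X_0,...,X_{n-1}) in {0,1}^n is an extensional function in
  PiE {..<n} (\<lambda>_. UNIV).\<close>

definition obs_space :: "nat \<Rightarrow> (nat \<Rightarrow> bool) set" where
  "obs_space n = PiE {..<n} (\<lambda>_. UNIV)"

definition joint_prob ::
  "nat \<Rightarrow> (nat \<Rightarrow> real) \<Rightarrow> (nat \<Rightarrow> real) \<Rightarrow> (nat \<Rightarrow> bool) \<Rightarrow> bool \<Rightarrow> real" where
  "joint_prob n psi eta x y =
     (1/2) * (\<Prod>i<n. if y then (if x i then psi i else 1 - psi i)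
                           else (if x i then 1 - eta i else eta i))"

definition err_prob ::
  "nat \<Rightarrow> (nat \<Rightarrow> real) \<Rightarrow> (nat \<Rightarrow> real) \<Rightarrow> ((nat \<Rightarrow> bool) \<Rightarrow> bool) \<Rightarrow> real" where
  "err_prob n psi eta f =
     (\<Sum>x\<in>obs_space n. \<Sum>y\<in>(UNIV :: bool set).
        if f x \<noteq> y then joint_prob n psi eta x y else 0)"

definition bal_acc :: "(nat \<Rightarrow> real) \<Rightarrow> (nat \<Rightarrow> real) \<Rightarrow> nat \<Rightarrow> real" where
  "bal_acc psi eta i = (psi i + eta i) / 2"

end

theory Submission
  imports Defs
begin

lemma sqrt_prod_aux: "finite A \<Longrightarrow> sqrt (prod f A) = (\<Prod>i\<in>A. sqrt (f i))"
  by (induction A rule: finite_induct) (auto simp: real_sqrt_mult)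

lemma coord_ineq:
  fixes a b :: real
  assumes "0 < a" "a < 1" "0 < b" "b < 1"
  shows "sqrt (a * (1 - b)) + sqrt ((1 - a) * b) \<le> sqrt ((a + b) * (2 - a - b))"
proof -
  let ?u = "sqrt (a * (1 - b))" and ?v = "sqrt ((1 - a) * b)"
  have u2: "?u^2 = a * (1 - b)" using assms by simp
  have v2: "?v^2 = (1 - a) * b" using assms by simp
  have uv: "?u * ?v = sqrt (a*(1-a)) * sqrt (b*(1-b))"
    by (simp add: real_sqrt_mult[symmetric] algebra_simps)
  have am: "2 * (sqrt (a*(1-a)) * sqrt (b*(1-b))) \<le> a*(1-a) + b*(1-b)"
  proof -
    have "0 \<le> (sqrt (a*(1-a)) - sqrt (b*(1-b)))^2" by simp
    moreover have "(sqrt (a*(1-a)))^2 = a*(1-a)" using assms by simp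
    moreover have "(sqrt (b*(1-b)))^2 = b*(1-b)" using assms by simp
    ultimately show ?thesis by (simp add: power2_diff)
  qed
  have "(?u + ?v)^2 \<le> (a + b) * (2 - a - b)"
    using u2 v2 uv am by (simp add: power2_sum algebra_simps)
  then have "sqrt ((?u + ?v)^2) \<le> sqrt ((a + b) * (2 - a - b))"
    using real_sqrt_le_mono by blast
  then show ?thesis by simp
qed

theorem theorem2:
  fixes n :: nat and psi eta :: "nat \<Rightarrow> real"
    and f_opt :: "(nat \<Rightarrow> bool) \<Rightarrow> bool"
  assumes "n \<ge> 1"
    and "\<And>i. i < n \<Longrightarrow> 0 < psi i \<and> psi i < 1"
    and "\<And>i. i < n \<Longrightarrow> 0 < eta i \<and> eta i < 1"
    and "\<And>f. err_prob n psi eta f_opt \<le> err_prob n psi eta f"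
  shows "err_prob n psi eta f_opt
           \<le> (1/2) * sqrt (\<Prod>i<n. (psi i + eta i) * (2 - psi i - eta i))
       \<and> (1/2) * sqrt (\<Prod>i<n. (psi i + eta i) * (2 - psi i - eta i))
           = (1/2) * 2 ^ n * sqrt (\<Prod>i<n. bal_acc psi eta i * (1 - bal_acc psi eta i))"
proof
  define A where "A i b = (if b then psi i else 1 - psi i)" for i b
  define B where "B i b = (if b then 1 - eta i else eta i)" for i b
  define p where "p x = joint_prob n psi eta x True" for x
  define q where "q x = joint_prob n psi eta x False" for x
  have p_eq: "p x = 1/2 * (\<Prod>i<n. A i (x i))" for x
    by (simp add: p_def joint_prob_def A_def)
  have q_eq: "q x = 1/2 * (\<Prod>i<n. B i (x i))" for x
    by (simp add: q_def joint_prob_def B_def)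
  have Apos: "i < n \<Longrightarrow> 0 \<le> A i b" for i b using assms(2)[of i] by (auto simp: A_def)
  have Bpos: "i < n \<Longrightarrow> 0 \<le> B i b" for i b using assms(3)[of i] by (auto simp: B_def)
  have pnn: "0 \<le> p x" for x unfolding p_eq using Apos by (auto intro: prod_nonneg)
  have qnn: "0 \<le> q x" for x unfolding q_eq using Bpos by (auto intro: prod_nonneg)
  define g where "g x = (q x < p x)" for x
  have err_g: "err_prob n psi eta g = (\<Sum>x\<in>obs_space n. min (p x) (q x))"
    unfolding err_prob_def
    by (rule sum.cong) (auto simp: UNIV_bool g_def p_def q_def min_def)
  have min_le: "min (p x) (q x) \<le> 1/2 * (\<Prod>i<n. sqrt (A i (x i) * B i (x i)))" for x
  proof -
    have "min (p x) (q x) \<le> sqrt (p x * q x)"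
    proof (cases "p x \<le> q x")
      case True
      then have "p x * p x \<le> p x * q x" using pnn by (simp add: mult_left_mono)
      then have "sqrt (p x * p x) \<le> sqrt (p x * q x)" using real_sqrt_le_mono by blast
      then show ?thesis using True pnn by simp
    next
      case False
      then have "q x * q x \<le> p x * q x" using qnn by (simp add: mult_right_mono)
      then have "sqrt (q x * q x) \<le> sqrt (p x * q x)" using real_sqrt_le_mono by blast
      then show ?thesis using False qnn by simp
    qed
    also have "p x * q x = 1/4 * (\<Prod>i<n. A i (x i) * B i (x i))"
      by (simp add: p_eq q_eq prod.distrib)
    also have "sqrt \<dots> = 1/2 * (\<Prod>i<n. sqrt (A i (x i) * B i (x i)))"
      by (simp add: real_sqrt_mult sqrt_prod_aux real_sqrt_divide)
    finally show ?thesis .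
  qed
  have fin: "finite (obs_space n)" unfolding obs_space_def by (simp add: finite_PiE)
  have "(\<Sum>x\<in>obs_space n. 1/2 * (\<Prod>i<n. sqrt (A i (x i) * B i (x i))))
      = 1/2 * (\<Prod>i<n. \<Sum>b\<in>UNIV. sqrt (A i b * B i b))"
    unfolding obs_space_def
    by (simp add: prod_sum_PiE sum_distrib_left)
  also have "\<dots> = 1/2 * (\<Prod>i<n. sqrt (psi i * (1 - eta i)) + sqrt ((1 - psi i) * eta i))"
    by (simp add: UNIV_bool A_def B_def add.commute)
  also have "\<dots> \<le> 1/2 * (\<Prod>i<n. sqrt ((psi i + eta i) * (2 - psi i - eta i)))"
    using assms(2,3) by (intro mult_left_mono prod_mono conjI coord_ineq add_nonneg_nonneg real_sqrt_ge_zero mult_nonneg_nonneg) (auto simp: less_imp_le)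
  also have "\<dots> = (1/2) * sqrt (\<Prod>i<n. (psi i + eta i) * (2 - psi i - eta i))"
    by (simp add: sqrt_prod_aux)
  finally have "err_prob n psi eta g \<le> (1/2) * sqrt (\<Prod>i<n. (psi i + eta i) * (2 - psi i - eta i))"
    unfolding err_g using sum_mono[of "obs_space n" "\<lambda>x. min (p x) (q x)", OF min_le] by linarith
  then show "err_prob n psi eta f_opt
           \<le> (1/2) * sqrt (\<Prod>i<n. (psi i + eta i) * (2 - psi i - eta i))"
    using assms(4)[of g] by linarith
next
  have "(\<Prod>i<n. (psi i + eta i) * (2 - psi i - eta i))
      = (\<Prod>i<n. 4 * (bal_acc psi eta i * (1 - bal_acc psi eta i)))"
    by (rule prod.cong) (auto simp: bal_acc_def field_simps)
  also have "\<dots> = 4 ^ n * (\<Prod>i<n. bal_acc psi eta i * (1 - bal_acc psi eta i))"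
    by (simp add: prod.distrib)
  finally have e0: "(\<Prod>i<n. (psi i + eta i) * (2 - psi i - eta i)) = 4 ^ n * (\<Prod>i<n. bal_acc psi eta i * (1 - bal_acc psi eta i))" .
  have f: "(4::real) ^ n = 2 ^ n * 2 ^ n"
    by (simp add: power_mult_distrib[symmetric])
  have "sqrt ((4::real) ^ n) = 2 ^ n"
    unfolding f real_sqrt_mult_self by simp
  then show "(1/2) * sqrt (\<Prod>i<n. (psi i + eta i) * (2 - psi i - eta i))
           = (1/2) * 2 ^ n * sqrt (\<Prod>i<n. bal_acc psi eta i * (1 - bal_acc psi eta i))"
    unfolding e0 real_sqrt_mult by simp
qed

end
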